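(* Let $p$ be a prime, $n \in \mathbb{N}$, $v \in \mathbb{Z}_p^n$, and let $t \le 2^{-7} n$. If $S \subset T_t(v)$, then $$\big| \{ i \in [n] : v_i \notin C(S) \} \big| \le \frac{n}{4}.$$
   Context: For $x, y \in \mathbb{Z}_p$, the product $x \cdot y \in \mathbb{Z}$ is obtained by identifying $x,y$ with their representatives in $\{0,1,\ldots,p-1\}$ and multiplying in $\mathbb{Z}$. For real $x$, $\|x\|$ denotes the distance from $x$ to the nearest integer. For $v \in \mathbb{Z}_p^n$ and $t \ge 0$, the level set is $$T_t(v) := \Big\{ k \in \mathbb{Z}_p : \sum_{i=1}^n \Big\| \frac{k \cdot v_i}{p} \Big\|^2 \le t \Big\}.$$ For $S \subset \mathbb{Z}_p$, $$C(S) := \Big\{ a \in \mathbb{Z}_p : \sum_{k \in S} \Big\| \frac{a \cdot k}{p} \Big\|^2 \le \frac{|S|}{2^5} \Big\}.$$ *)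

theory Defs
  imports "HOL-Analysis.Analysis"
begin

text \<open>Elements of Z_p are represented by their canonical representatives in {0..<p}.
  A vector v in Z_p^n is a function on the index set {1..n} with values in {0..<p}.\<close>

definition dist_int :: "real \<Rightarrow> real" where
  "dist_int x = \<bar>x - of_int (round x)\<bar>"

definition level_set :: "nat \<Rightarrow> nat \<Rightarrow> (nat \<Rightarrow> nat) \<Rightarrow> real \<Rightarrow> nat set" where
  "level_set p n v t =
     {k \<in> {0..<p}. (\<Sum>i\<in>{1..n}. (dist_int (real (k * v i) / real p))\<^sup>2) \<le> t}"

definition C_set :: "nat \<Rightarrow> nat set \<Rightarrow> nat set" where
  "C_set p S =
     {a \<in> {0..<p}. (\<Sum>k\<in>S. (dist_int (real (a * k) / real p))\<^sup>2) \<le> real (card S) / 2 ^ 5}"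

end

theory Submission
  imports Defs
begin

theorem lemma3p1:
  fixes p n :: nat and v :: "nat \<Rightarrow> nat" and t :: real and S :: "nat set"
  assumes "prime p"
    and "\<forall>i\<in>{1..n}. v i < p"
    and "0 \<le> t"
    and "t \<le> real n / 2 ^ 7"
    and "S \<subseteq> level_set p n v t"
  shows "real (card {i \<in> {1..n}. v i \<notin> C_set p S}) \<le> real n / 4"
proof -
  define B where "B = {i \<in> {1..n}. v i \<notin> C_set p S}"
  define f where "f = (\<lambda>k i. (dist_int (real (k * v i) / real p))\<^sup>2)"
  have "S \<subseteq> {0..<p}" using assms(5) unfolding level_set_def by auto
  then have finS: "finite S" using finite_subset by blast
  have finB: "finite B" unfolding B_def by simp
  have Bsub: "B \<subseteq> {1..n}" unfolding B_def by auto
  show ?thesis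
  proof (cases "S = {}")
    case True
    then have "B = {}" using assms(2) unfolding B_def C_set_def by auto
    then show ?thesis unfolding B_def[symmetric] by simp
  next
    case False
    then have cS: "card S > 0" using finS by auto
    show ?thesis
    proof (cases "B = {}")
      case True then show ?thesis unfolding B_def[symmetric] by simp
    next
      case Bne: False
      have f0: "f k i \<ge> 0" for k i unfolding f_def by simp
      have hi: "(\<Sum>k\<in>S. f k i) > real (card S) / 2^5" if "i \<in> B" for i
        using that assms(2) unfolding B_def C_set_def f_def
        by (auto simp: mult.commute)
      have hk: "(\<Sum>i\<in>{1..n}. f k i) \<le> t" if "k \<in> S" for k
        using that assms(5) unfolding level_set_def f_def by auto
      have "(\<Sum>i\<in>B. real (card S) / 2^5) < (\<Sum>i\<in>B. \<Sum>k\<in>S. f k i)"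
        using sum_strict_mono[OF finB Bne hi] by simp
      also have "\<dots> = (\<Sum>k\<in>S. \<Sum>i\<in>B. f k i)" by (rule sum.swap)
      also have "\<dots> \<le> (\<Sum>k\<in>S. \<Sum>i\<in>{1..n}. f k i)"
        by (rule sum_mono, rule sum_mono2) (use Bsub f0 in auto)
      also have "\<dots> \<le> (\<Sum>k\<in>S. t)" by (rule sum_mono) (use hk in auto)
      finally have "real (card B) * real (card S) / 32 < real (card S) * t" by simp
      also have "\<dots> \<le> real (card S) * (real n / 128)" using assms(4) cS by simp
      finally have "real (card S) * (real (card B)) < real (card S) * (real n / 4)" by (simp add: algebra_simps)
      then have "real (card B) < real n / 4" using cS
        by (simp add: mult_less_cancel_left)
      then show ?thesis unfolding B_def by simp
    qed
  qed
qed

end
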